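(* For every integer $k\geq 2$, let $G_k$ be the graph obtained as follows: take two vertices $u_1,u_2$ joined by $2k$ parallel edges $e_1,\dots,e_{2k}$; subdivide each $e_i$ once by a new vertex $v_i$; and for every odd $i\in\{1,3,\dots,2k-1\}$ add $2k-2$ parallel edges between $v_i$ and $v_{i+1}$. Let $\mathcal O$ be the set of $k$ pairwise edge-disjoint $4$-cycles $u_1v_iu_2v_{i+1}u_1$ (using the subdivided edges), $i\in\{1,3,\dots,2k-1\}$. Then $G_k$ is a $2$-connected $2k$-regular graph, and if $t$ is a positive integer such that some $t$-factor of $G_k$ intersects every cycle of $\mathcal O$ in at least one edge, then $t \geq k$.
   Context: Graphs are finite and loopless but may have parallel edges. A cycle is a connected $2$-regular subgraph. A $t$-factor is a spanning $t$-regular subgraph. $2$-connected means connected with no cut-vertex. *)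

theory Defs
  imports Main
begin

text \<open>A multigraph is given by a vertex set V, an edge set E (edges are abstract
objects, so parallel edges are allowed) and an incidence map ends assigning to each
edge its set of two distinct endpoints (looplessness).\<close>

definition multigraph :: "'v set \<Rightarrow> 'e set \<Rightarrow> ('e \<Rightarrow> 'v set) \<Rightarrow> bool" where
  "multigraph V E ends \<longleftrightarrow> finite V \<and> finite E \<and>
     (\<forall>e\<in>E. ends e \<subseteq> V \<and> card (ends e) = 2)"

text \<open>Degree of v in the spanning subgraph with edge set F (loopless, so each
incident edge counts once).\<close>
definition mdegree :: "'e set \<Rightarrow> ('e \<Rightarrow> 'v set) \<Rightarrow> 'v \<Rightarrow> nat" where
  "mdegree F ends v = card {e\<in>F. v \<in> ends e}"

definition regular :: "'v set \<Rightarrow> 'e set \<Rightarrow> ('e \<Rightarrow> 'v set) \<Rightarrow> nat \<Rightarrow> bool" where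
  "regular V E ends d \<longleftrightarrow> (\<forall>v\<in>V. mdegree E ends v = d)"

definition is_factor :: "'v set \<Rightarrow> 'e set \<Rightarrow> ('e \<Rightarrow> 'v set) \<Rightarrow> nat \<Rightarrow> 'e set \<Rightarrow> bool" where
  "is_factor V E ends t F \<longleftrightarrow> F \<subseteq> E \<and> regular V F ends t"

definition adj_in :: "'e set \<Rightarrow> ('e \<Rightarrow> 'v set) \<Rightarrow> 'v set \<Rightarrow> 'v \<Rightarrow> 'v \<Rightarrow> bool" where
  "adj_in E ends W x y \<longleftrightarrow> x \<in> W \<and> y \<in> W \<and> (\<exists>e\<in>E. ends e = {x, y})"

definition connected_on :: "'e set \<Rightarrow> ('e \<Rightarrow> 'v set) \<Rightarrow> 'v set \<Rightarrow> bool" where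
  "connected_on E ends W \<longleftrightarrow> W \<noteq> {} \<and>
     (\<forall>x\<in>W. \<forall>y\<in>W. (adj_in E ends W)\<^sup>*\<^sup>* x y)"

definition cut_vertex :: "'v set \<Rightarrow> 'e set \<Rightarrow> ('e \<Rightarrow> 'v set) \<Rightarrow> 'v \<Rightarrow> bool" where
  "cut_vertex V E ends v \<longleftrightarrow> v \<in> V \<and> V - {v} \<noteq> {} \<and> \<not> connected_on E ends (V - {v})"

definition two_connected :: "'v set \<Rightarrow> 'e set \<Rightarrow> ('e \<Rightarrow> 'v set) \<Rightarrow> bool" where
  "two_connected V E ends \<longleftrightarrow> connected_on E ends V \<and> (\<forall>v\<in>V. \<not> cut_vertex V E ends v)"

datatype gvert = U1 | U2 | Vx nat   (* Vx i = v_i, 1 \<le> i \<le> 2k *)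

datatype gedge =
    A nat        (* A i : the half of e_i from u_1 to v_i *)
  | B nat        (* B i : the half of e_i from v_i to u_2 *)
  | P nat nat    (* P i j : j-th parallel edge between v_i and v_(i+1), i odd, j < 2k-2 *)

definition Gk_V :: "nat \<Rightarrow> gvert set" where
  "Gk_V k = {U1, U2} \<union> Vx ` {1..2*k}"

definition Gk_E :: "nat \<Rightarrow> gedge set" where
  "Gk_E k = A ` {1..2*k} \<union> B ` {1..2*k} \<union>
     {P i j | i j. i \<in> {1..2*k-1} \<and> odd i \<and> j < 2*k-2}"

fun Gk_ends :: "gedge \<Rightarrow> gvert set" where
  "Gk_ends (A i) = {U1, Vx i}"
| "Gk_ends (B i) = {Vx i, U2}"
| "Gk_ends (P i j) = {Vx i, Vx (i+1)}"

definition Gk_O :: "nat \<Rightarrow> gedge set set" where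
  "Gk_O k = {{A i, B i, B (i+1), A (i+1)} | i. i \<in> {1..2*k-1} \<and> odd i}"

end

theory Submission
  imports Defs
begin

lemma PE: "P i m \<in> Gk_E k \<longleftrightarrow> i \<in> {1..2*k-1} \<and> odd i \<and> m < 2*k-2"
  by (auto simp: Gk_E_def)
lemma AE: "A i \<in> Gk_E k \<longleftrightarrow> i \<in> {1..2*k}"
  by (auto simp: Gk_E_def)
lemma BE: "B i \<in> Gk_E k \<longleftrightarrow> i \<in> {1..2*k}"
  by (auto simp: Gk_E_def)

lemma inc_odd: assumes "odd j" "e \<in> Gk_E k"
  shows "Vx j \<in> Gk_ends e \<longleftrightarrow> e = A j \<or> e = B j \<or> (\<exists>m. e = P j m)"
  using assms by (cases e) (auto simp: PE)

lemma inc_even: assumes "odd j" "e \<in> Gk_E k"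
  shows "Vx (j+1) \<in> Gk_ends e \<longleftrightarrow> e = A (j+1) \<or> e = B (j+1) \<or> (\<exists>m. e = P j m)"
  using assms by (cases e) (auto simp: PE)

lemma U1_inc: "e \<in> Gk_E k \<Longrightarrow> U1 \<in> Gk_ends e \<longleftrightarrow> (\<exists>i. e = A i)"
  by (cases e) auto
lemma U2_inc: "e \<in> Gk_E k \<Longrightarrow> U2 \<in> Gk_ends e \<longleftrightarrow> (\<exists>i. e = B i)"
  by (cases e) auto

lemma U1_inc2: "e \<in> Gk_E k \<Longrightarrow> U1 \<in> Gk_ends e \<Longrightarrow> e \<in> A ` {1..2*k}"
  by (cases e) (auto simp: AE)
lemma U2_inc2: "e \<in> Gk_E k \<Longrightarrow> U2 \<in> Gk_ends e \<Longrightarrow> e \<in> B ` {1..2*k}"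
  by (cases e) (auto simp: BE)

lemma finE: "finite (Gk_E k)"
proof -
  have "{P i j | i j. i \<in> {1..2*k-1} \<and> odd i \<and> j < 2*k-2} \<subseteq> (\<lambda>(i,j). P i j) ` ({1..2*k-1} \<times> {..<2*k-2})"
    by auto
  then have "finite {P i j | i j. i \<in> {1..2*k-1} \<and> odd i \<and> j < 2*k-2}"
    by (rule finite_subset) auto
  then show ?thesis unfolding Gk_E_def by auto
qed

lemma card_loc: "card ({A x, B x} \<union> P j ` {..<n}) = n + 2"
proof -
  have "card ({A x, B x} \<union> P j ` {..<n}) = card {A x, B x} + card (P j ` {..<n})"
    by (rule card_Un_disjoint) auto
  moreover have "card (P j ` {..<n}) = n" by (subst card_image) (auto simp: inj_on_def)
  ultimately show ?thesis by simp
qed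

lemma sym_rt: assumes "\<And>x y. R x y \<Longrightarrow> R y x" "R\<^sup>*\<^sup>* x y" shows "R\<^sup>*\<^sup>* y x"
  using assms(2) by induction (auto intro: converse_rtranclp_into_rtranclp assms(1))

lemma adj_sym: "adj_in E ends W x y \<Longrightarrow> adj_in E ends W y x"
  unfolding adj_in_def by (auto simp: insert_commute)

lemma hub_conn: assumes "h \<in> W" "\<And>x. x \<in> W \<Longrightarrow> (adj_in E ends W)\<^sup>*\<^sup>* h x"
  shows "connected_on E ends W"
  unfolding connected_on_def
proof (intro conjI ballI)
  show "W \<noteq> {}" using assms by auto
  fix x y assume "x \<in> W" "y \<in> W"
  have "(adj_in E ends W)\<^sup>*\<^sup>* x h" using sym_rt[OF adj_sym assms(2)[OF \<open>x\<in>W\<close>]] .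
  then show "(adj_in E ends W)\<^sup>*\<^sup>* x y" using assms(2)[OF \<open>y\<in>W\<close>] by auto
qed

lemma adjA: "i \<in> {1..2*k} \<Longrightarrow> U1 \<in> W \<Longrightarrow> Vx i \<in> W \<Longrightarrow> adj_in (Gk_E k) Gk_ends W U1 (Vx i)"
  unfolding adj_in_def by (rule conjI, simp, rule conjI, simp, rule bexI[of _ "A i"]) (auto simp: AE)
lemma adjB: "i \<in> {1..2*k} \<Longrightarrow> U2 \<in> W \<Longrightarrow> Vx i \<in> W \<Longrightarrow> adj_in (Gk_E k) Gk_ends W U2 (Vx i)"
  unfolding adj_in_def by (rule conjI, simp, rule conjI, simp, rule bexI[of _ "B i"]) (auto simp: BE insert_commute)

lemma via: assumes "i \<in> {1..2*k}" "U1 \<in> W" "U2 \<in> W" "Vx i \<in> W"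
  shows "(adj_in (Gk_E k) Gk_ends W)\<^sup>*\<^sup>* U1 U2"
proof -
  have "adj_in (Gk_E k) Gk_ends W U1 (Vx i)" by (rule adjA) (use assms in auto)
  moreover have "adj_in (Gk_E k) Gk_ends W (Vx i) U2" by (rule adj_sym, rule adjB) (use assms in auto)
  ultimately show ?thesis by auto
qed

theorem mainTheorem15:
  fixes k :: nat
  assumes "k \<ge> 2"
  shows "multigraph (Gk_V k) (Gk_E k) Gk_ends
       \<and> two_connected (Gk_V k) (Gk_E k) Gk_ends
       \<and> regular (Gk_V k) (Gk_E k) Gk_ends (2*k)
       \<and> (\<forall>t F. t \<ge> 1 \<and> is_factor (Gk_V k) (Gk_E k) Gk_ends t F
              \<and> (\<forall>C\<in>Gk_O k. F \<inter> C \<noteq> {}) \<longrightarrow> t \<ge> k)"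
proof (intro conjI allI impI)
  show "multigraph (Gk_V k) (Gk_E k) Gk_ends"
    unfolding multigraph_def
  proof (intro conjI ballI)
    show "finite (Gk_V k)" by (simp add: Gk_V_def)
    show "finite (Gk_E k)" by (rule finE)
    fix e assume "e \<in> Gk_E k"
    then show "Gk_ends e \<subseteq> Gk_V k" "card (Gk_ends e) = 2"
      by (cases e; auto simp: Gk_V_def AE BE PE)+
  qed
  show "two_connected (Gk_V k) (Gk_E k) Gk_ends"
    unfolding two_connected_def
  proof (intro conjI ballI)
    show "connected_on (Gk_E k) Gk_ends (Gk_V k)"
    proof (rule hub_conn[of U1])
      show "U1 \<in> Gk_V k" by (simp add: Gk_V_def)
      fix x assume "x \<in> Gk_V k"
      moreover have "(adj_in (Gk_E k) Gk_ends (Gk_V k))\<^sup>*\<^sup>* U1 U2"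
        by (rule via[of 1]) (use assms in \<open>auto simp: Gk_V_def\<close>)
      moreover have "(adj_in (Gk_E k) Gk_ends (Gk_V k))\<^sup>*\<^sup>* U1 (Vx i)" if "i \<in> {1..2*k}" for i
        by (rule r_into_rtranclp, rule adjA) (use that in \<open>auto simp: Gk_V_def\<close>)
      ultimately show "(adj_in (Gk_E k) Gk_ends (Gk_V k))\<^sup>*\<^sup>* U1 x"
        unfolding Gk_V_def by auto
    qed
    fix v assume "v \<in> Gk_V k"
    let ?W = "Gk_V k - {v}"
    have "connected_on (Gk_E k) Gk_ends ?W"
    proof (cases "v = U1")
      case True
      show ?thesis
      proof (rule hub_conn[of U2])
        show "U2 \<in> ?W" using True by (simp add: Gk_V_def)
        fix x assume x: "x \<in> ?W"
        have "(adj_in (Gk_E k) Gk_ends ?W)\<^sup>*\<^sup>* U2 (Vx i)" if "i \<in> {1..2*k}" for i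
          by (rule r_into_rtranclp, rule adjB) (use that True in \<open>auto simp: Gk_V_def\<close>)
        with x True show "(adj_in (Gk_E k) Gk_ends ?W)\<^sup>*\<^sup>* U2 x"
          unfolding Gk_V_def by auto
      qed
    next
      case False
      show ?thesis
      proof (rule hub_conn[of U1])
        show "U1 \<in> ?W" using False by (simp add: Gk_V_def)
        fix x assume x: "x \<in> ?W"
        have vi: "(adj_in (Gk_E k) Gk_ends ?W)\<^sup>*\<^sup>* U1 (Vx i)" if "i \<in> {1..2*k}" "Vx i \<noteq> v" for i
          by (rule r_into_rtranclp, rule adjA) (use that False in \<open>auto simp: Gk_V_def\<close>)
        have "(adj_in (Gk_E k) Gk_ends ?W)\<^sup>*\<^sup>* U1 U2" if "v \<noteq> U2"
        proof (cases "v = Vx 1")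
          case True
          show ?thesis by (rule via[of 2]) (use assms that True False in \<open>auto simp: Gk_V_def\<close>)
        next
          case F2: False
          show ?thesis by (rule via[of 1]) (use assms that F2 False in \<open>auto simp: Gk_V_def\<close>)
        qed
        with x vi show "(adj_in (Gk_E k) Gk_ends ?W)\<^sup>*\<^sup>* U1 x"
          unfolding Gk_V_def by auto
      qed
    qed
    then show "\<not> cut_vertex (Gk_V k) (Gk_E k) Gk_ends v"
      unfolding cut_vertex_def by auto
  qed
  show "regular (Gk_V k) (Gk_E k) Gk_ends (2*k)"
    unfolding regular_def mdegree_def
  proof
    fix v assume v: "v \<in> Gk_V k"
    have cA: "card (A ` {1..2*k}) = 2*k" by (subst card_image) (auto simp: inj_on_def)
    have cB: "card (B ` {1..2*k}) = 2*k" by (subst card_image) (auto simp: inj_on_def)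
    show "card {e \<in> Gk_E k. v \<in> Gk_ends e} = 2 * k"
    proof (cases v)
      case U1
      have "{e \<in> Gk_E k. v \<in> Gk_ends e} = A ` {1..2*k}"
        using U1 by (auto simp: U1_inc AE)
      then show ?thesis using cA by simp
    next
      case U2
      have "{e \<in> Gk_E k. v \<in> Gk_ends e} = B ` {1..2*k}"
        using U2 by (auto simp: U2_inc BE)
      then show ?thesis using cB by simp
    next
      case (Vx i)
      with v have i: "i \<in> {1..2*k}" by (auto simp: Gk_V_def)
      show ?thesis
      proof (cases "odd i")
        case True
        have "i \<noteq> 2*k" using True by auto
        with i have j: "i \<in> {1..2*k-1}" by auto
        have "{e \<in> Gk_E k. v \<in> Gk_ends e} = {A i, B i} \<union> P i ` {..<2*k-2}"
          using Vx True i j by (auto simp: inc_odd[OF True] AE BE PE)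
        then show ?thesis using card_loc[of i i "2*k-2"] assms by simp
      next
        case False
        have "i \<noteq> 1" using False by auto
        with i have "i = (i - 1) + 1" by auto
        moreover have "odd (i - 1)" using False \<open>i = (i - 1) + 1\<close>
          by (metis even_plus_one_iff)
        ultimately obtain j where ij: "i = j + 1" "odd j" by blast
        have "j \<noteq> 0" using ij(2) by (metis odd_pos less_numeral_extra(3))
        with i ij have j: "j \<in> {1..2*k-1}" by auto
        have inc: "\<And>e. e \<in> Gk_E k \<Longrightarrow> (Vx i \<in> Gk_ends e) = (e = A i \<or> e = B i \<or> (\<exists>m. e = P j m))"
          using inc_even[OF ij(2)] ij(1) by simp
        have "{e \<in> Gk_E k. v \<in> Gk_ends e} = {A i, B i} \<union> P j ` {..<2*k-2}"
          using Vx inc i j ij by (auto simp: AE BE PE)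
        then show ?thesis using card_loc[of i j "2*k-2"] assms by simp
      qed
    qed
  qed
  fix t F
  assume h: "1 \<le> t \<and> is_factor (Gk_V k) (Gk_E k) Gk_ends t F \<and> (\<forall>C\<in>Gk_O k. F \<inter> C \<noteq> {})"
  then have FE: "F \<subseteq> Gk_E k" and reg: "\<And>v. v \<in> Gk_V k \<Longrightarrow> card {e\<in>F. v \<in> Gk_ends e} = t"
    and cyc: "\<And>C. C \<in> Gk_O k \<Longrightarrow> F \<inter> C \<noteq> {}"
    unfolding is_factor_def regular_def mdegree_def by auto
  have finF: "finite F" using FE finE by (rule finite_subset)
  define S where "S = {1..2*k}"
  define X where "X = F \<inter> (A ` S \<union> B ` S)"
  have XU1: "{e\<in>F. U1 \<in> Gk_ends e} = F \<inter> A ` S"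
    using FE U1_inc2[of _ k] by (auto simp: S_def)
  have XU2: "{e\<in>F. U2 \<in> Gk_ends e} = F \<inter> B ` S"
    using FE U2_inc2[of _ k] by (auto simp: S_def)
  have "card X = card (F \<inter> A ` S) + card (F \<inter> B ` S)"
    unfolding X_def Int_Un_distrib by (rule card_Un_disjoint) (use finF in auto)
  also have "\<dots> = 2 * t" using reg[of U1] reg[of U2] XU1 XU2 by (simp add: Gk_V_def)
  finally have cX: "card X = 2 * t" .
  have key: "F \<inter> {A i, B i} \<noteq> {}" if iS: "i \<in> S" for i
  proof -
    obtain j where j: "odd j" "j \<in> {1..2*k-1}" "i = j \<or> i = j + 1"
    proof (cases "odd i")
      case True
      have "i \<noteq> 2*k" using True by auto
      with iS True show ?thesis using that[of i] by (auto simp: S_def)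
    next
      case False
      have "i \<noteq> 1" using False by auto
      with iS have "i \<ge> 2" by (auto simp: S_def)
      have o: "odd (i - 1)" using False \<open>i \<ge> 2\<close> by presburger
      have r: "i - 1 \<in> {1..2*k-1}" using iS \<open>i \<ge> 2\<close> by (auto simp: S_def)
      have "i = i - 1 + 1" using \<open>i \<ge> 2\<close> by simp
      then show ?thesis using that[OF o r] by blast
    qed
    have C: "{A j, B j, B (j+1), A (j+1)} \<in> Gk_O k" unfolding Gk_O_def using j by blast
    have vj: "j \<in> {1..2*k}" "j+1 \<in> {1..2*k}" using j by auto
    let ?Q = "F \<inter> range (P j)"
    have e1: "{e\<in>F. Vx j \<in> Gk_ends e} = (F \<inter> {A j, B j}) \<union> ?Q"
      using FE inc_odd[OF j(1)] by blast
    have e2: "{e\<in>F. Vx (j+1) \<in> Gk_ends e} = (F \<inter> {A (j+1), B (j+1)}) \<union> ?Q"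
      using FE inc_even[OF j(1)] by blast
    have c1: "card (F \<inter> {A j, B j}) + card ?Q = t"
      using reg[of "Vx j"] vj e1 finF by (subst card_Un_disjoint[symmetric]) (auto simp: Gk_V_def)
    have c2: "card (F \<inter> {A (j+1), B (j+1)}) + card ?Q = t"
      using reg[of "Vx (j+1)"] vj e2 finF by (subst card_Un_disjoint[symmetric]) (auto simp: Gk_V_def)
    have "F \<inter> {A j, B j} \<noteq> {} \<or> F \<inter> {A (j+1), B (j+1)} \<noteq> {}"
      using cyc[OF C] by blast
    moreover have eq: "card (F \<inter> {A j, B j}) = card (F \<inter> {A (j+1), B (j+1)})"
      using c1 c2 by linarith
    moreover have "finite (F \<inter> {A j, B j})" "finite (F \<inter> {A (j+1), B (j+1)})" by auto
    ultimately have "F \<inter> {A j, B j} \<noteq> {} \<and> F \<inter> {A (j+1), B (j+1)} \<noteq> {}"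
      by (metis card_0_eq)
    then show ?thesis using j(3) by auto
  qed
  define f where "f i = (SOME e. e \<in> F \<inter> {A i, B i})" for i
  have f: "f i \<in> F \<inter> {A i, B i}" if "i \<in> S" for i
    unfolding f_def using key[OF that] by (metis ex_in_conv someI_ex)
  have "card S \<le> card X"
  proof (rule card_inj_on_le[of f])
    show "inj_on f S"
    proof (rule inj_onI)
      fix x y assume "x \<in> S" "y \<in> S" "f x = f y"
      with f[of x] f[of y] show "x = y" by auto
    qed
    show "f ` S \<subseteq> X" using f unfolding X_def by auto
    show "finite X" using finF X_def by simp
  qed
  then show "t \<ge> k" using cX by (simp add: S_def)
qed

end
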